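(* Let $a\le b$ be real numbers and let $u,v\in L^\infty(\mathbb{T})$ satisfy $a\le v(x)\le b$ a.e. and $\int_{\mathbb{T}}u(x)\,dx=I\in[a,b]$. Then there exists $w\in L^\infty(\mathbb{T})$ such that $a\le w(x)\le b$ a.e., $\int_{\mathbb{T}}w(x)\,dx=I$, and $$\|u-w\|_{L^1(\mathbb{T})}\le2\|u-v\|_{L^1(\mathbb{T})}.$$
   Context: $\mathbb{T}=\mathbb{R}/\mathbb{Z}$ with Lebesgue measure of total mass $1$. *)

theory Defs
  imports "HOL-Analysis.Analysis"
begin

text \<open>The circle T = R/Z with normalized Lebesgue measure, modelled by the
fundamental domain [0,1) with Lebesgue measure (total mass 1).
Functions on T are real functions considered on [0,1).\<close>

definition T_measure :: "real measure" where
  "T_measure = lebesgue_on {0..<1}"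

definition Linf :: "(real \<Rightarrow> real) set" where
  "Linf = {f. f \<in> borel_measurable T_measure \<and> (\<exists>C. AE x in T_measure. \<bar>f x\<bar> \<le> C)}"

end

theory Submission
  imports Defs
begin

lemma T_fin: "finite_measure T_measure"
  unfolding T_measure_def by (rule finite_measure_lebesgue_on) (rule measurable_convex, simp add: convex_real_interval, rule bounded_subset[of "{0..1}"], auto)

lemma T_one: "measure T_measure (space T_measure) = 1"
  unfolding T_measure_def by (simp add: measure_restrict_space)

lemma T_const: "(\<integral>x. c \<partial>T_measure) = (c::real)"
  using T_one by simp

lemma Linf_int: "f \<in> Linf \<Longrightarrow> integrable T_measure f"
  unfolding Linf_def
proof safe
  fix C assume m: "f \<in> borel_measurable T_measure" and ae: "AE x in T_measure. \<bar>f x\<bar> \<le> C"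
  show "integrable T_measure f"
    by (rule finite_measure.integrable_const_bound[OF T_fin, of f C]) (use ae m in auto)
qed

theorem lemma3:
  fixes a b I :: real and u v :: "real \<Rightarrow> real"
  assumes "a \<le> b"
    and "u \<in> Linf" and "v \<in> Linf"
    and "AE x in T_measure. a \<le> v x \<and> v x \<le> b"
    and "(\<integral>x. u x \<partial>T_measure) = I"
    and "a \<le> I" and "I \<le> b"
  shows "\<exists>w\<in>Linf. (AE x in T_measure. a \<le> w x \<and> w x \<le> b)
           \<and> (\<integral>x. w x \<partial>T_measure) = I
           \<and> (\<integral>x. \<bar>u x - w x\<bar> \<partial>T_measure) \<le> 2 * (\<integral>x. \<bar>u x - v x\<bar> \<partial>T_measure)"
proof -
  have iu: "integrable T_measure u" and iv: "integrable T_measure v"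
    using assms(2,3) Linf_int by auto
  define J where "J = (\<integral>x. v x \<partial>T_measure)"
  have aJ: "a \<le> J" unfolding J_def
  proof -
    have "(\<integral>x. a \<partial>T_measure) \<le> (\<integral>x. v x \<partial>T_measure)"
      by (rule integral_mono_AE) (use iv assms(4) finite_measure.integrable_const[OF T_fin] in auto)
    then show "a \<le> (\<integral>x. v x \<partial>T_measure)" by (simp add: T_one)
  qed
  have Jb: "J \<le> b" unfolding J_def
  proof -
    have "(\<integral>x. v x \<partial>T_measure) \<le> (\<integral>x. b \<partial>T_measure)"
      by (rule integral_mono_AE) (use iv assms(4) finite_measure.integrable_const[OF T_fin] in auto)
    then show "(\<integral>x. v x \<partial>T_measure) \<le> b" by (simp add: T_one)
  qed
  define c where "c = (if J \<le> I then b else a)"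
  define t where "t = (if c = J then 0 else (I - J) / (c - J))"
  have t0: "0 \<le> t" and t1: "t \<le> 1" and tc: "t * (c - J) = I - J"
    using aJ Jb assms(6,7) by (auto simp: t_def c_def field_simps)
  have tabs: "t * \<bar>c - J\<bar> = \<bar>I - J\<bar>"
    using t0 tc by (metis abs_mult abs_of_nonneg)
  define w where "w = (\<lambda>x. v x + t * (c - v x))"
  have iw: "integrable T_measure w" unfolding w_def using iv finite_measure.integrable_const[OF T_fin] by (intro Bochner_Integration.integrable_add integrable_mult_right Bochner_Integration.integrable_diff) auto
  have wI: "(\<integral>x. w x \<partial>T_measure) = I"
  proof -
    have ic: "integrable T_measure (\<lambda>x. c - v x)"
      using iv finite_measure.integrable_const[OF T_fin] by (intro Bochner_Integration.integrable_diff) auto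
    have "(\<integral>x. w x \<partial>T_measure) = J + (\<integral>x. t * (c - v x) \<partial>T_measure)"
      unfolding w_def J_def using iv ic by (intro Bochner_Integration.integral_add) auto
    also have "(\<integral>x. t * (c - v x) \<partial>T_measure) = t * (\<integral>x. c - v x \<partial>T_measure)"
      by simp
    also have "(\<integral>x. c - v x \<partial>T_measure) = c - J"
      unfolding J_def using iv finite_measure.integrable_const[OF T_fin]
      by (subst Bochner_Integration.integral_diff) (auto simp: T_one)
    finally show ?thesis using tc by simp
  qed
  have wab: "AE x in T_measure. a \<le> w x \<and> w x \<le> b"
    using assms(4)
  proof eventually_elim
    case (elim x)
    have "c \<ge> a" "c \<le> b" using assms(1) by (auto simp: c_def)
    have "w x = (1 - t) * v x + t * c" by (simp add: w_def algebra_simps)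
    moreover have "(1 - t) * a + t * a \<le> (1 - t) * v x + t * c"
      using elim t0 t1 \<open>c \<ge> a\<close> by (intro add_mono mult_left_mono) auto
    moreover have "(1 - t) * v x + t * c \<le> (1 - t) * b + t * b"
      using elim t0 t1 \<open>c \<le> b\<close> by (intro add_mono mult_left_mono) auto
    ultimately show ?case by (simp add: algebra_simps)
  qed
  have wL: "w \<in> Linf"
  proof -
    have "w \<in> borel_measurable T_measure" using iw by auto
    moreover have "AE x in T_measure. \<bar>w x\<bar> \<le> \<bar>a\<bar> + \<bar>b\<bar>"
      using wab by eventually_elim auto
    ultimately show ?thesis unfolding Linf_def by auto
  qed
  have cv: "(\<integral>x. \<bar>c - v x\<bar> \<partial>T_measure) = \<bar>c - J\<bar>"
  proof (cases "J \<le> I")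
    case True
    then have c: "c = b" by (simp add: c_def)
    have "(\<integral>x. \<bar>c - v x\<bar> \<partial>T_measure) = (\<integral>x. b - v x \<partial>T_measure)"
      by (rule integral_cong_AE) (use assms(4) c iv in auto)
    also have "\<dots> = b - J" unfolding J_def using iv finite_measure.integrable_const[OF T_fin] by (subst Bochner_Integration.integral_diff) (auto simp: T_one)
    finally show ?thesis using c Jb by simp
  next
    case False
    then have c: "c = a" by (simp add: c_def)
    have "(\<integral>x. \<bar>c - v x\<bar> \<partial>T_measure) = (\<integral>x. v x - a \<partial>T_measure)"
      by (rule integral_cong_AE) (use assms(4) c iv in auto)
    also have "\<dots> = J - a" unfolding J_def using iv finite_measure.integrable_const[OF T_fin] by (subst Bochner_Integration.integral_diff) (auto simp: T_one)
    finally show ?thesis using c aJ by simp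
  qed
  have vw: "(\<integral>x. \<bar>v x - w x\<bar> \<partial>T_measure) = \<bar>I - J\<bar>"
  proof -
    have "(\<integral>x. \<bar>v x - w x\<bar> \<partial>T_measure) = (\<integral>x. t * \<bar>c - v x\<bar> \<partial>T_measure)"
      unfolding w_def using t0 by (simp add: abs_mult)
    also have "\<dots> = t * \<bar>c - J\<bar>" using cv by simp
    finally show ?thesis using tabs by simp
  qed
  have IJ: "\<bar>I - J\<bar> \<le> (\<integral>x. \<bar>u x - v x\<bar> \<partial>T_measure)"
  proof -
    have "I - J = (\<integral>x. u x - v x \<partial>T_measure)"
      using iu iv assms(5) by (simp add: J_def)
    also have "\<bar>\<dots>\<bar> \<le> (\<integral>x. \<bar>u x - v x\<bar> \<partial>T_measure)"
      by (rule integral_abs_bound)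
    finally show ?thesis .
  qed
  have tri: "(\<integral>x. \<bar>u x - w x\<bar> \<partial>T_measure) \<le>
      (\<integral>x. \<bar>u x - v x\<bar> \<partial>T_measure) + (\<integral>x. \<bar>v x - w x\<bar> \<partial>T_measure)"
  proof -
    have "(\<integral>x. \<bar>u x - w x\<bar> \<partial>T_measure) \<le> (\<integral>x. \<bar>u x - v x\<bar> + \<bar>v x - w x\<bar> \<partial>T_measure)"
      by (rule integral_mono) (use iu iv iw in auto)
    also have "\<dots> = (\<integral>x. \<bar>u x - v x\<bar> \<partial>T_measure) + (\<integral>x. \<bar>v x - w x\<bar> \<partial>T_measure)"
      by (rule Bochner_Integration.integral_add) (use iu iv iw in auto)
    finally show ?thesis .
  qed
  show ?thesis
    using wL wab wI tri vw IJ by (intro bexI[of _ w]) auto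
qed

end
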